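(* Let $X=\mathbb{R}^n$ and let $f\colon X\to\mathbb{R}$ be Borel measurable and attain a minimum. Consider the population game $F$ with strategy set $X$ and mean payoff functions $F_\mu(x)=\langle f,\mu\rangle - f(x)$ for $\mu\in\mathcal{P}(X)$. Then a distribution $\mu\in\mathcal{P}(X)$ is a Nash equilibrium of $F$ if and only if $\mu$ is a global minimizer of $\inf_{\nu\in\mathcal{P}(X)}\langle f,\nu\rangle$. Furthermore, $\mu$ is a strict Nash equilibrium of $F$ if and only if $\mu$ is the unique global minimizer of $\inf_{\nu\in\mathcal{P}(X)}\langle f,\nu\rangle$.
   Context: $\mathcal{P}(X)$ denotes the set of Borel probability measures on $X$. For a measure $\mu$ and measurable $h$, $\langle h,\mu\rangle:=\int_X h\,d\mu$, which is allowed to be infinite (since $f$ is bounded below, $\langle f,\mu\rangle\in(-\infty,+\infty]$). A population game with strategy set $X$ assigns to each population state $\mu\in\mathcal{P}(X)$ a payoff function $F_\mu\colon X\to\mathbb{R}$. Equivalently, $F_\mu(x)=\int_X (f(x')-f(x))\,d\mu(x')$. A Nash equilibrium of $F$ is a $\mu\in\mathcal{P}(X)$ with $\langle F_\mu,\nu\rangle\le\langle F_\mu,\mu\rangle$ for all $\nu\in\mathcal{P}(X)$; it is a strict Nash equilibrium if the inequality is strict for all $\nu\neq\mu$. *)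

theory Defs
  imports "HOL-Probability.Probability"
begin

definition prob_measures :: "('a::topological_space) measure set" where
  "prob_measures = {M. prob_space M \<and> sets M = sets borel}"

text \<open>For h bounded
  below (or above) this is the usual, possibly infinite, value of the integral.\<close>
definition pairing :: "('a \<Rightarrow> real) \<Rightarrow> 'a measure \<Rightarrow> ereal" where
  "pairing h \<mu> =
     enn2ereal (\<integral>\<^sup>+ x. ennreal (h x) \<partial>\<mu>) - enn2ereal (\<integral>\<^sup>+ x. ennreal (- h x) \<partial>\<mu>)"

text \<open>A population game assigns to population states real-valued payoff functions.
  It is given as a partial map: None means that no real-valued payoff function
  is defined at that state.\<close>
type_synonym 'a pop_game = "'a measure \<Rightarrow> ('a \<Rightarrow> real) option"

definition nash_eq :: "'a::topological_space pop_game \<Rightarrow> 'a measure \<Rightarrow> bool" where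
  "nash_eq F \<mu> \<longleftrightarrow> \<mu> \<in> prob_measures \<and>
     (\<exists>F\<mu>. F \<mu> = Some F\<mu> \<and> (\<forall>\<nu>\<in>prob_measures. pairing F\<mu> \<nu> \<le> pairing F\<mu> \<mu>))"

definition strict_nash_eq :: "'a::topological_space pop_game \<Rightarrow> 'a measure \<Rightarrow> bool" where
  "strict_nash_eq F \<mu> \<longleftrightarrow> \<mu> \<in> prob_measures \<and>
     (\<exists>F\<mu>. F \<mu> = Some F\<mu> \<and> (\<forall>\<nu>\<in>prob_measures. \<nu> \<noteq> \<mu> \<longrightarrow> pairing F\<mu> \<nu> < pairing F\<mu> \<mu>))"

definition mean_payoff_game :: "('a \<Rightarrow> real) \<Rightarrow> 'a pop_game" where
  "mean_payoff_game f \<mu> =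
     (if \<bar>pairing f \<mu>\<bar> < \<infinity> then Some (\<lambda>x. real_of_ereal (pairing f \<mu>) - f x) else None)"

definition global_minimizer :: "('a::topological_space \<Rightarrow> real) \<Rightarrow> 'a measure \<Rightarrow> bool" where
  "global_minimizer f \<mu> \<longleftrightarrow> \<mu> \<in> prob_measures \<and> (\<forall>\<nu>\<in>prob_measures. pairing f \<mu> \<le> pairing f \<nu>)"

definition unique_global_minimizer :: "('a::topological_space \<Rightarrow> real) \<Rightarrow> 'a measure \<Rightarrow> bool" where
  "unique_global_minimizer f \<mu> \<longleftrightarrow> global_minimizer f \<mu> \<and>
     (\<forall>\<nu>. global_minimizer f \<nu> \<longrightarrow> \<nu> = \<mu>)"

end

theory Submission
  imports Defs
begin

lemma pairing_integrable:
  assumes "integrable M h"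
  shows "pairing h M = ereal (integral\<^sup>L M h)"
proof -
  obtain r q where "0 \<le> r" "0 \<le> q" "(\<integral>\<^sup>+ x. ennreal (h x) \<partial>M) = ennreal r"
    "(\<integral>\<^sup>+ x. ennreal (- h x) \<partial>M) = ennreal q" "integral\<^sup>L M h = r - q"
    using integrableE[OF assms] by metis
  then show ?thesis unfolding pairing_def by simp
qed

lemma pairing_nonint:
  assumes "h \<in> borel_measurable M" "\<not> integrable M h"
    and "(\<integral>\<^sup>+ x. ennreal (- h x) \<partial>M) \<noteq> \<infinity>"
  shows "pairing h M = \<infinity>"
proof -
  have "(\<integral>\<^sup>+ x. ennreal (h x) \<partial>M) = \<infinity>" using assms real_integrable_def by blast
  then show ?thesis using assms(3) unfolding pairing_def
    by (cases "(\<integral>\<^sup>+ x. ennreal (- h x) \<partial>M)") auto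
qed

lemma pairing_nonint2:
  assumes "h \<in> borel_measurable M" "\<not> integrable M h"
    and "(\<integral>\<^sup>+ x. ennreal (h x) \<partial>M) \<noteq> \<infinity>"
  shows "pairing h M = -\<infinity>"
proof -
  have "(\<integral>\<^sup>+ x. ennreal (- h x) \<partial>M) = \<infinity>" using assms real_integrable_def by blast
  then show ?thesis using assms(3) unfolding pairing_def
    by (cases "(\<integral>\<^sup>+ x. ennreal (h x) \<partial>M)") auto
qed

lemma key:
  fixes f :: "'a::topological_space \<Rightarrow> real"
  assumes M: "M \<in> prob_measures" and f: "f \<in> borel_measurable borel" and m: "\<And>x. m \<le> f x"
  shows "pairing (\<lambda>x. c - f x) M = ereal c - pairing f M" and "pairing f M > -\<infinity>"
proof -
  interpret prob_space M using M unfolding prob_measures_def by auto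
  have fM: "f \<in> borel_measurable M" using f M unfolding prob_measures_def
    using measurable_cong_sets by blast
  have cfM: "(\<lambda>x. c - f x) \<in> borel_measurable M" using fM by measurable
  have b1: "(\<integral>\<^sup>+ x. ennreal (- f x) \<partial>M) \<noteq> \<infinity>"
  proof -
    have "(\<integral>\<^sup>+ x. ennreal (- f x) \<partial>M) \<le> (\<integral>\<^sup>+ x. ennreal (- m) \<partial>M)"
      by (rule nn_integral_mono) (use m in \<open>auto intro: ennreal_leI\<close>)
    also have "\<dots> = ennreal (- m)" by (simp add: emeasure_space_1)
    finally show ?thesis by (auto simp: top_unique)
  qed
  have b2: "(\<integral>\<^sup>+ x. ennreal (c - f x) \<partial>M) \<noteq> \<infinity>"
  proof -
    have "(\<integral>\<^sup>+ x. ennreal (c - f x) \<partial>M) \<le> (\<integral>\<^sup>+ x. ennreal (c - m) \<partial>M)"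
      by (rule nn_integral_mono) (use m in \<open>auto intro: ennreal_leI\<close>)
    also have "\<dots> = ennreal (c - m)" by (simp add: emeasure_space_1)
    finally show ?thesis by (auto simp: top_unique)
  qed
  show "pairing (\<lambda>x. c - f x) M = ereal c - pairing f M"
  proof (cases "integrable M f")
    case True
    then have "integrable M (\<lambda>x. c - f x)" by auto
    then show ?thesis using True by (simp add: pairing_integrable prob_space)
  next
    case False
    then have "\<not> integrable M (\<lambda>x. c - f x)"
      using Bochner_Integration.integrable_diff[of M "\<lambda>_. c" "\<lambda>x. c - f x"] by auto
    then show ?thesis using False pairing_nonint[OF fM False b1] pairing_nonint2[OF cfM _ b2] by simp
  qed
  show "pairing f M > -\<infinity>"
    using b1 unfolding pairing_def
    by (cases "(\<integral>\<^sup>+ x. ennreal (- f x) \<partial>M)"; cases "(\<integral>\<^sup>+ x. ennreal (f x) \<partial>M)") auto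
qed

lemma dirac:
  fixes f :: "'a::topological_space \<Rightarrow> real"
  assumes f: "f \<in> borel_measurable borel"
  shows "return borel x0 \<in> prob_measures" "pairing f (return borel x0) = ereal (f x0)"
proof -
  show "return borel x0 \<in> prob_measures" unfolding prob_measures_def
    by (auto intro: prob_space_return)
  have "(\<integral>\<^sup>+ x. ennreal (f x) \<partial>return borel x0) = ennreal (f x0)"
    by (rule nn_integral_return) (use f in auto)
  moreover have "(\<integral>\<^sup>+ x. ennreal (- f x) \<partial>return borel x0) = ennreal (- f x0)"
    by (rule nn_integral_return) (use f in auto)
  ultimately show "pairing f (return borel x0) = ereal (f x0)"
    unfolding pairing_def by (cases "f x0 \<ge> 0") (auto simp: ennreal_neg zero_ennreal.rep_eq)
qed

theorem proposition1:
  fixes f :: "real ^ 'n \<Rightarrow> real" and \<mu> :: "(real ^ 'n) measure"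
  assumes "f \<in> borel_measurable borel"
    and "\<exists>x0. \<forall>x. f x0 \<le> f x"
  shows "(nash_eq (mean_payoff_game f) \<mu> \<longleftrightarrow> global_minimizer f \<mu>)
       \<and> (strict_nash_eq (mean_payoff_game f) \<mu> \<longleftrightarrow> unique_global_minimizer f \<mu>)"
proof -
  obtain x0 where x0: "\<And>x. f x0 \<le> f x" using assms(2) by blast
  note K = key[OF _ assms(1) x0]
  note D = dirac[OF assms(1), of x0]
  have fin: "\<bar>pairing f \<mu>\<bar> < \<infinity>" if "global_minimizer f \<mu>"
  proof -
    have "pairing f \<mu> \<le> ereal (f x0)" using that D unfolding global_minimizer_def by metis
    moreover have "pairing f \<mu> > -\<infinity>" using K(2) that unfolding global_minimizer_def by blast
    ultimately show ?thesis by (cases "pairing f \<mu>") auto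
  qed
  have G: "mean_payoff_game f \<mu> = Some (\<lambda>x. real_of_ereal (pairing f \<mu>) - f x)"
    if "\<bar>pairing f \<mu>\<bar> < \<infinity>" using that unfolding mean_payoff_game_def by simp
  have P: "pairing (\<lambda>x. real_of_ereal (pairing f \<mu>) - f x) \<nu> = pairing f \<mu> - pairing f \<nu>"
    if "\<bar>pairing f \<mu>\<bar> < \<infinity>" "\<nu> \<in> prob_measures" for \<nu>
    using K(1)[OF that(2)] that(1) by (cases "pairing f \<mu>") auto
  have Q: "(pairing f \<mu> - pairing f \<nu> \<le> pairing f \<mu> - pairing f \<mu>) \<longleftrightarrow> pairing f \<mu> \<le> pairing f \<nu>"
    "(pairing f \<mu> - pairing f \<nu> < pairing f \<mu> - pairing f \<mu>) \<longleftrightarrow> pairing f \<mu> < pairing f \<nu>"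
    if "\<bar>pairing f \<mu>\<bar> < \<infinity>" for \<nu>
    using that by (cases "pairing f \<mu>"; cases "pairing f \<nu>"; auto)+
  have N: "nash_eq (mean_payoff_game f) \<mu> \<longleftrightarrow> global_minimizer f \<mu>"
  proof
    assume H: "nash_eq (mean_payoff_game f) \<mu>"
    then have fin: "\<bar>pairing f \<mu>\<bar> < \<infinity>" and mu: "\<mu> \<in> prob_measures"
      unfolding nash_eq_def mean_payoff_game_def by (auto split: if_splits)
    have "\<forall>\<nu>\<in>prob_measures. pairing (\<lambda>x. real_of_ereal (pairing f \<mu>) - f x) \<nu>
         \<le> pairing (\<lambda>x. real_of_ereal (pairing f \<mu>) - f x) \<mu>"
      using H G[OF fin] unfolding nash_eq_def by auto
    then show "global_minimizer f \<mu>" unfolding global_minimizer_def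
      using mu P[OF fin] Q[OF fin] by auto
  next
    assume H: "global_minimizer f \<mu>"
    note fin = fin[OF H]
    then show "nash_eq (mean_payoff_game f) \<mu>" unfolding nash_eq_def
      using H G[OF fin] P[OF fin] Q[OF fin] unfolding global_minimizer_def by auto
  qed
  have S: "strict_nash_eq (mean_payoff_game f) \<mu> \<longleftrightarrow> unique_global_minimizer f \<mu>"
  proof
    assume H: "strict_nash_eq (mean_payoff_game f) \<mu>"
    then have fin: "\<bar>pairing f \<mu>\<bar> < \<infinity>" and mu: "\<mu> \<in> prob_measures"
      unfolding strict_nash_eq_def mean_payoff_game_def by (auto split: if_splits)
    have "\<forall>\<nu>\<in>prob_measures. \<nu> \<noteq> \<mu> \<longrightarrow> pairing (\<lambda>x. real_of_ereal (pairing f \<mu>) - f x) \<nu>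
         < pairing (\<lambda>x. real_of_ereal (pairing f \<mu>) - f x) \<mu>"
      using H G[OF fin] unfolding strict_nash_eq_def by auto
    then have lt: "\<forall>\<nu>\<in>prob_measures. \<nu> \<noteq> \<mu> \<longrightarrow> pairing f \<mu> < pairing f \<nu>"
      unfolding P[OF fin mu] using P[OF fin] Q(2)[OF fin] by (simp del: diff_self)
    then have gm: "global_minimizer f \<mu>" unfolding global_minimizer_def
      using mu by (auto simp: order.order_iff_strict)
    show "unique_global_minimizer f \<mu>" unfolding unique_global_minimizer_def
    proof (intro conjI allI impI gm)
      fix \<nu> assume "global_minimizer f \<nu>"
      then have "\<nu> \<in> prob_measures" "pairing f \<nu> \<le> pairing f \<mu>"
        using mu unfolding global_minimizer_def by auto
      then show "\<nu> = \<mu>" using lt by (auto simp: not_less[symmetric])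
    qed
  next
    assume H: "unique_global_minimizer f \<mu>"
    then have gm: "global_minimizer f \<mu>" unfolding unique_global_minimizer_def by auto
    note fin = fin[OF gm]
    have lt: "pairing f \<mu> < pairing f \<nu>" if "\<nu> \<in> prob_measures" "\<nu> \<noteq> \<mu>" for \<nu>
    proof (rule ccontr)
      assume "\<not> pairing f \<mu> < pairing f \<nu>"
      then have "pairing f \<nu> = pairing f \<mu>" using gm that unfolding global_minimizer_def
        by (auto intro: antisym simp: not_less)
      then have "global_minimizer f \<nu>" using gm that unfolding global_minimizer_def by auto
      then show False using H that unfolding unique_global_minimizer_def by auto
    qed
    show "strict_nash_eq (mean_payoff_game f) \<mu>" unfolding strict_nash_eq_def
      using gm G[OF fin] P[OF fin] Q[OF fin] lt unfolding global_minimizer_def by auto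
  qed
  show ?thesis using N S by blast
qed

end
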